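(* Let $\mathbb Q\subset K$ be a finite field extension and let $(V,M_V)$ be a DVR with quotient field $\mathbb Q(X)$ containing $\mathbb Z[X]$ such that $A:=V\cap\mathbb Q[X]$ is a PvMD. Let $(W,M_W)$ be a valuation domain with quotient field $K(X)$ extending $V$ (i.e. $W\cap\mathbb Q(X)=V$). Then $B:=W\cap K[X]$ is a PvMD.
   Context: For an integral domain $R$ with quotient field $F$ and nonzero fractional ideal $I$: $(R:I)=\{x\in F:xI\subseteq R\}$, $I^v=(R:(R:I))$, $I^t=\bigcup\{J^v:J\subseteq I \text{ finitely generated}\}$; $I$ is a $t$-ideal if $I=(0)$ or $I=I^t$; $t$-maximal ideals are $t$-ideals maximal among proper $t$-ideals. $R$ is a PvMD if $R_{\mathfrak m}$ is a valuation domain for all $t$-maximal $\mathfrak m$. *)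

theory Defs
  imports "HOL-Computational_Algebra.Polynomial" "HOL-Computational_Algebra.Fraction_Field"
begin

definition subring :: "'f::field set \<Rightarrow> bool" where
  "subring R \<longleftrightarrow> 0 \<in> R \<and> 1 \<in> R \<and> (\<forall>x\<in>R. \<forall>y\<in>R. x + y \<in> R \<and> x * y \<in> R \<and> - x \<in> R)"

definition qf :: "'f::field set \<Rightarrow> 'f set" where
  "qf R = {a / b | a b. a \<in> R \<and> b \<in> R \<and> b \<noteq> 0}"

definition colon :: "'f::field set \<Rightarrow> 'f set \<Rightarrow> 'f set" where
  "colon R I = {x \<in> qf R. \<forall>i\<in>I. x * i \<in> R}"

definition v_op :: "'f::field set \<Rightarrow> 'f set \<Rightarrow> 'f set" where
  "v_op R I = colon R (colon R I)"

definition rspan :: "'f::field set \<Rightarrow> 'f set \<Rightarrow> 'f set" where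
  "rspan R S = {(\<Sum>s\<in>S. c s * s) | c. \<forall>s\<in>S. c s \<in> R}"

definition fin_gen :: "'f::field set \<Rightarrow> 'f set \<Rightarrow> bool" where
  "fin_gen R J \<longleftrightarrow> (\<exists>S. finite S \<and> S \<subseteq> qf R \<and> J = rspan R S)"

definition t_op :: "'f::field set \<Rightarrow> 'f set \<Rightarrow> 'f set" where
  "t_op R I = \<Union>{v_op R J | J. fin_gen R J \<and> J \<subseteq> I}"

definition is_ideal :: "'f::field set \<Rightarrow> 'f set \<Rightarrow> bool" where
  "is_ideal R I \<longleftrightarrow> I \<subseteq> R \<and> 0 \<in> I \<and> (\<forall>x\<in>I. \<forall>y\<in>I. x + y \<in> I) \<and> (\<forall>r\<in>R. \<forall>x\<in>I. r * x \<in> I)"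

definition t_ideal :: "'f::field set \<Rightarrow> 'f set \<Rightarrow> bool" where
  "t_ideal R I \<longleftrightarrow> is_ideal R I \<and> (I = {0} \<or> I = t_op R I)"

definition t_maximal :: "'f::field set \<Rightarrow> 'f set \<Rightarrow> bool" where
  "t_maximal R m \<longleftrightarrow> t_ideal R m \<and> m \<noteq> R \<and>
     (\<forall>J. t_ideal R J \<and> J \<noteq> R \<and> m \<subseteq> J \<longrightarrow> J = m)"

definition localize :: "'f::field set \<Rightarrow> 'f set \<Rightarrow> 'f set" where
  "localize R m = {a / s | a s. a \<in> R \<and> s \<in> R - m}"

definition valuation_domain_in :: "'f::field set \<Rightarrow> 'f set \<Rightarrow> bool" where
  "valuation_domain_in F S \<longleftrightarrow> subring S \<and> S \<subseteq> F \<and>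
     (\<forall>x\<in>F. x \<noteq> 0 \<longrightarrow> x \<in> S \<or> inverse x \<in> S)"

definition PvMD :: "'f::field set \<Rightarrow> bool" where
  "PvMD R \<longleftrightarrow> subring R \<and>
     (\<forall>m. t_maximal R m \<longrightarrow> valuation_domain_in (qf R) (localize R m))"

definition valuation_domain :: "'f::field set \<Rightarrow> bool" where
  "valuation_domain W \<longleftrightarrow> valuation_domain_in UNIV W"

definition DVR :: "'f::field set \<Rightarrow> bool" where
  "DVR V \<longleftrightarrow> (\<exists>v :: 'f \<Rightarrow> int.
      (\<forall>n. \<exists>x. x \<noteq> 0 \<and> v x = n) \<and>
      (\<forall>x y. x \<noteq> 0 \<longrightarrow> y \<noteq> 0 \<longrightarrow> v (x * y) = v x + v y) \<and>
      (\<forall>x y. x \<noteq> 0 \<longrightarrow> y \<noteq> 0 \<longrightarrow> x + y \<noteq> 0 \<longrightarrow> v (x + y) \<ge> min (v x) (v y)) \<and>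
      V = {x. x = 0 \<or> v x \<ge> 0})"

definition finite_ext_Q :: "'k::field_char_0 itself \<Rightarrow> bool" where
  "finite_ext_Q _ \<longleftrightarrow> (\<exists>S :: 'k set. finite S \<and>
      (\<forall>x. \<exists>c. x = (\<Sum>s\<in>S. of_rat (c s) * s)))"

text \<open>Polynomial part: R \<inter> k[X] inside k(X).\<close>
definition poly_part :: "'a::idom poly fract set \<Rightarrow> 'a poly fract set" where
  "poly_part R = {Fract p 1 | p. Fract p 1 \<in> R}"

end

theory Submission
  imports Defs
begin


lemma Fract1_add: "Fract (p::'a::idom) 1 + Fract q 1 = Fract (p+q) 1" by simp
lemma Fract1_mult: "Fract (p::'a::idom) 1 * Fract q 1 = Fract (p*q) 1" by simp
lemma Fract1_minus: "- Fract (p::'a::idom) 1 = Fract (-p) 1" by simp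
lemma Fract1_pow: "Fract (p::'a::idom) 1 ^ n = Fract (p^n) 1"
  by (induct n) (simp_all add: fract_collapse)
lemma Fract1_sum: "(\<Sum>i\<in>I. Fract (f i::'a::idom) 1) = Fract (\<Sum>i\<in>I. f i) 1"
  by (induct I rule: infinite_finite_induct) (simp_all add: fract_collapse)
lemma Fract1_eq: "Fract (p::'a::idom) 1 = Fract q 1 \<longleftrightarrow> p = q" by (simp add: eq_fract)
lemma Fract1_0: "Fract (p::'a::idom) 1 = 0 \<longleftrightarrow> p = 0" by (simp add: eq_fract fract_collapse[symmetric] Zero_fract_def)

lemma map_poly_of_rat_add: "map_poly (of_rat::rat\<Rightarrow>'k::field_char_0) (p + q) = map_poly of_rat p + map_poly of_rat q"
  by (intro poly_eqI) (simp add: coeff_map_poly of_rat_add)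
lemma map_poly_of_rat_mult: "map_poly (of_rat::rat\<Rightarrow>'k::field_char_0) (p * q) = map_poly of_rat p * map_poly of_rat q"
proof (induct p)
  case (pCons a p)
  show ?case using pCons
    by (simp add: map_poly_of_rat_add map_poly_smult of_rat_mult map_poly_pCons)
qed simp
lemma map_poly_of_rat_eq0: "map_poly (of_rat::rat\<Rightarrow>'k::field_char_0) p = 0 \<longleftrightarrow> p = 0"
  by (rule map_poly_eq_0_iff) auto

definition hq :: "rat poly \<Rightarrow> 'k::field_char_0 poly" where "hq = map_poly of_rat"

definition emb :: "rat poly fract \<Rightarrow> 'k::field_char_0 poly fract" where
  "emb x = (SOME y. \<exists>a b. b \<noteq> 0 \<and> x = Fract a b \<and> y = Fract (hq a) (hq b))"

lemma emb_Fract: assumes "b \<noteq> 0" shows "(emb (Fract a b) :: 'k::field_char_0 poly fract) = Fract (hq a) (hq b)"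
proof -
  have ex: "\<exists>y. \<exists>a' b'. b' \<noteq> 0 \<and> Fract a b = Fract a' b' \<and> y = Fract (hq a') (hq b')"
    using assms by blast
  then obtain a' b' where ab: "b' \<noteq> 0" "Fract a b = Fract a' b'" and e: "(emb (Fract a b) :: 'k poly fract) = Fract (hq a') (hq b')"
    unfolding emb_def by (smt (verit, ccfv_threshold) someI_ex)
  from ab assms have "a * b' = a' * b" by (simp add: eq_fract)
  hence "(hq a :: 'k poly) * hq b' = hq a' * hq b" by (metis hq_def map_poly_of_rat_mult)
  moreover have "(hq b :: 'k poly) \<noteq> 0" "(hq b' :: 'k poly) \<noteq> 0" using assms ab by (simp_all add: hq_def map_poly_of_rat_eq0)
  ultimately have "Fract (hq a') (hq b') = (Fract (hq a) (hq b) :: 'k poly fract)" by (subst eq_fract(1)) (auto dest: sym)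
  thus ?thesis using e by simp
qed

lemma hq_simps: "hq (p+q) = hq p + hq q" "hq (p*q) = hq p * hq q" "hq 1 = 1" "hq 0 = 0"
  "hq (-p) = - hq p" "hq p = 0 \<longleftrightarrow> p = 0"
  by (simp_all add: hq_def map_poly_of_rat_add map_poly_of_rat_mult map_poly_of_rat_eq0)
     (intro poly_eqI, simp add: coeff_map_poly of_rat_minus)

lemma emb_add: "emb (x + y) = emb x + emb y"
  by (cases x, cases y) (simp add: emb_Fract hq_simps)
lemma emb_mult: "emb (x * y) = emb x * emb y"
  by (cases x, cases y) (simp add: emb_Fract hq_simps)
lemma emb_one: "emb 1 = 1"
  by (simp add: One_fract_def emb_Fract hq_simps)
lemma emb_zero: "emb 0 = 0"
  by (simp add: Zero_fract_def emb_Fract hq_simps)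
lemma emb_inverse: "emb (inverse x) = inverse (emb x)"
  by (cases x, case_tac "a = 0") (simp_all add: emb_Fract hq_simps fract_collapse emb_zero)
lemma emb_minus: "emb (- x) = - emb x"
  by (cases x) (simp add: emb_Fract hq_simps)
lemma emb_eq0: "emb x = 0 \<longleftrightarrow> x = 0"
  by (cases x) (simp add: emb_Fract hq_simps Fract1_0 eq_fract Zero_fract_def)
lemma emb_pow: "emb (x ^ n) = emb x ^ n"
  by (induct n) (simp_all add: emb_one emb_mult)
lemma emb_Fract1: "emb (Fract p 1) = Fract (hq p) 1"
  by (simp add: emb_Fract hq_simps)


lemma alg_rel:
  fixes \<phi> :: "'a::field \<Rightarrow> 'b::field" and x :: 'b
  assumes add: "\<And>a b. \<phi> (a+b) = \<phi> a + \<phi> b" and mul: "\<And>a b. \<phi> (a*b) = \<phi> a * \<phi> b" and one: "\<phi> 1 = 1"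
  and fin: "finite S" and sp: "\<And>i. \<exists>u. x^i = (\<Sum>v\<in>S. \<phi> (u v) * v)" and nz: "x \<noteq> 0"
  shows "\<exists>a c e (I::nat set). finite I \<and> a \<noteq> 0 \<and> \<phi> a + x * (\<Sum>i\<in>I. \<phi> (c i) * x ^ (e i)) = 0"
proof -
  have "\<phi> 0 + \<phi> 0 = \<phi> 0 + 0" using add[of 0 0] by simp
  hence z: "\<phi> 0 = 0" by (simp only: add_left_cancel)
  have mi: "\<phi> (- a) = - \<phi> a" for a using add[of a "-a"] z by (simp add: eq_neg_iff_add_eq_0 add.commute)
  interpret vs: vector_space "(\<lambda>c v. \<phi> c * v)"
    by unfold_locales (simp_all add: add mul one algebra_simps)
  have spanS: "vs.span S = range (\<lambda>u. \<Sum>v\<in>S. \<phi> (u v) * v)" by (rule vs.span_finite[OF fin])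
  define n where "n = card S"
  show ?thesis
  proof (cases "inj_on (\<lambda>i. x^i) {0..n}")
    case True
    define P where "P = (\<lambda>i. x^i) ` {0..n}"
    have cP: "card P = n + 1" unfolding P_def using True by (simp add: card_image)
    have PS: "P \<subseteq> vs.span S" unfolding P_def spanS using sp by blast
    have "vs.dependent P"
    proof (rule ccontr)
      assume "\<not> vs.dependent P"
      hence "card P \<le> card S" using vs.independent_span_bound[OF fin _ PS] by blast
      with cP n_def show False by linarith
    qed
    hence "\<exists>t u. finite t \<and> t \<subseteq> P \<and> (\<Sum>v\<in>t. \<phi> (u v) * v) = 0 \<and> (\<exists>v\<in>t. u v \<noteq> 0)"
      by (simp only: vs.dependent_explicit)
    then obtain t u v0 where t: "finite t" "t \<subseteq> P" "(\<Sum>v\<in>t. \<phi> (u v) * v) = 0" and v0: "v0 \<in> t" "u v0 \<noteq> 0"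
      by blast
    define I0 where "I0 = {i\<in>{0..n}. x^i \<in> t \<and> u (x^i) \<noteq> 0}"
    have fI0: "finite I0" unfolding I0_def by simp
    have "(\<Sum>v\<in>t. \<phi> (u v) * v) = (\<Sum>v\<in>{v\<in>t. u v \<noteq> 0}. \<phi> (u v) * v)"
      by (rule sum.mono_neutral_right) (auto simp: t z)
    also have "{v\<in>t. u v \<noteq> 0} = (\<lambda>i. x^i) ` I0"
      using t(2) unfolding I0_def P_def by auto
    also have "(\<Sum>v\<in>(\<lambda>i. x^i) ` I0. \<phi> (u v) * v) = (\<Sum>i\<in>I0. \<phi> (u (x^i)) * x^i)"
      by (rule sum.reindex_cong[where l="\<lambda>i. x^i"]) (auto intro: inj_on_subset[OF True] simp: I0_def)
    finally have s0: "(\<Sum>i\<in>I0. \<phi> (u (x^i)) * x^i) = 0" using t(3) by simp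
    obtain i0 where "i0 \<in> {0..n}" "v0 = x^i0" using v0 t(2) unfolding P_def by blast
    hence ne: "I0 \<noteq> {}" using v0 unfolding I0_def by blast
    define j where "j = Min I0"
    have jI: "j \<in> I0" using fI0 ne j_def by simp
    have jle: "\<And>i. i \<in> I0 \<Longrightarrow> j \<le> i" using fI0 j_def by simp
    have "(\<Sum>i\<in>I0. \<phi> (u (x^i)) * x^i) = \<phi> (u (x^j)) * x^j + (\<Sum>i\<in>I0-{j}. \<phi> (u (x^i)) * x^i)"
      using jI fI0 by (simp add: sum.remove)
    also have "(\<Sum>i\<in>I0-{j}. \<phi> (u (x^i)) * x^i) = (\<Sum>i\<in>I0-{j}. x^j * (x * (\<phi> (u (x^i)) * x^(i-j-1))))"
    proof (rule sum.cong)
      fix i assume "i \<in> I0 - {j}"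
      hence "j < i" using jle by force
      hence ii: "i = j + Suc (i-j-1)" by simp
      have "x^i = x^j * (x * x^(i-j-1))" by (subst ii) (simp only: power_add power_Suc)
      thus "\<phi> (u (x^i)) * x^i = x^j * (x * (\<phi> (u (x^i)) * x^(i-j-1)))" by (simp add: algebra_simps)
    qed simp
    finally have "x^j * (\<phi> (u (x^j)) + x * (\<Sum>i\<in>I0-{j}. \<phi> (u (x^i)) * x^(i-j-1))) = 0"
      using s0 by (simp add: algebra_simps sum_distrib_left)
    hence "\<phi> (u (x^j)) + x * (\<Sum>i\<in>I0-{j}. \<phi> (u (x^i)) * x^(i-j-1)) = 0" using nz by simp
    moreover have "u (x^j) \<noteq> 0" using jI I0_def by simp
    ultimately show ?thesis using fI0
      apply -
      apply (rule_tac x="u (x^j)" in exI, rule_tac x="\<lambda>i. u (x^i)" in exI, rule_tac x="\<lambda>i. i-j-1" in exI, rule_tac x="I0-{j}" in exI)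
      by simp
  next
    case False
    then obtain i j where ij: "i < j" "x^i = x^j"
      unfolding inj_on_def by (metis linorder_neqE_nat)
    have "x^j = x^i * x^(j-i)" using \<open>i<j\<close> by (metis le_add_diff_inverse less_imp_le power_add)
    hence "x^(j-i) = 1" using ij nz by simp
    moreover have "j - i = Suc (j-i-1)" using ij by simp
    ultimately have "x * x^(j-i-1) = 1" by (metis power_Suc)
    hence "\<phi> (-1) + x * (\<Sum>k\<in>{0::nat}. \<phi> 1 * x ^ (j-i-1)) = 0" using mi one by simp
    thus ?thesis
      apply -
      apply (rule_tac x="-1" in exI, rule_tac x="\<lambda>_. 1" in exI, rule_tac x="\<lambda>_. j-i-1" in exI, rule_tac x="{0::nat}" in exI)
      by simp
  qed
qed


lemma subring_sum: "subring R \<Longrightarrow> (\<And>i. i \<in> I \<Longrightarrow> f i \<in> R) \<Longrightarrow> sum f I \<in> R"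
  by (induct I rule: infinite_finite_induct) (auto simp: subring_def)
lemma subring_prod: "subring R \<Longrightarrow> (\<And>i. i \<in> I \<Longrightarrow> f i \<in> R) \<Longrightarrow> prod f I \<in> R"
  by (induct I rule: infinite_finite_induct) (auto simp: subring_def)
lemma subring_pow: "subring R \<Longrightarrow> x \<in> R \<Longrightarrow> x ^ n \<in> R"
  by (induct n) (auto simp: subring_def)
lemma subring_diff: "subring R \<Longrightarrow> x \<in> R \<Longrightarrow> y \<in> R \<Longrightarrow> x - y \<in> R"
  unfolding subring_def by (metis diff_conv_add_uminus)

lemma ideal_sum: "is_ideal R I \<Longrightarrow> (\<And>i. i \<in> A \<Longrightarrow> f i \<in> I) \<Longrightarrow> sum f A \<in> I"
  by (induct A rule: infinite_finite_induct) (auto simp: is_ideal_def)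

lemma rspan_mem: assumes "subring R" "finite S" "s \<in> S" shows "s \<in> rspan R S"
proof -
  have "(\<Sum>t\<in>S. (if t = s then 1 else 0) * t) = (\<Sum>t\<in>S. if t = s then s else 0)" by (rule sum.cong) auto
  also have "\<dots> = s" using assms by simp
  finally have "(\<Sum>t\<in>S. (if t = s then 1 else 0) * t) = s" .
  moreover have "\<forall>t\<in>S. (if t = s then 1 else 0) \<in> R" using assms(1) by (auto simp: subring_def)
  ultimately show ?thesis unfolding rspan_def
    apply -
    apply (rule CollectI, rule_tac x="\<lambda>t. if t = s then 1 else 0" in exI)
    by simp
qed

lemma rspan_sub_ideal: assumes "is_ideal R I" "S \<subseteq> I" shows "rspan R S \<subseteq> I"
proof
  fix x assume "x \<in> rspan R S"
  then obtain c where x: "x = (\<Sum>s\<in>S. c s * s)" "\<forall>s\<in>S. c s \<in> R" unfolding rspan_def by blast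
  show "x \<in> I" unfolding x(1) using assms x(2) by (intro ideal_sum) (auto simp: is_ideal_def)
qed

lemma colon_rspan: assumes "subring R" "finite S"
  shows "x \<in> colon R (rspan R S) \<longleftrightarrow> x \<in> qf R \<and> (\<forall>s\<in>S. x * s \<in> R)"
proof
  assume "x \<in> colon R (rspan R S)"
  thus "x \<in> qf R \<and> (\<forall>s\<in>S. x * s \<in> R)" using rspan_mem[OF assms] unfolding colon_def by blast
next
  assume a: "x \<in> qf R \<and> (\<forall>s\<in>S. x * s \<in> R)"
  show "x \<in> colon R (rspan R S)" unfolding colon_def
  proof (intro CollectI conjI ballI)
    show "x \<in> qf R" using a by simp
    fix i assume "i \<in> rspan R S"
    then obtain c where i: "i = (\<Sum>s\<in>S. c s * s)" "\<forall>s\<in>S. c s \<in> R" unfolding rspan_def by blast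
    have "x * i = (\<Sum>s\<in>S. c s * (x * s))" unfolding i(1) by (simp add: sum_distrib_left algebra_simps)
    also have "\<dots> \<in> R" using a i(2) assms(1) by (intro subring_sum) (auto simp: subring_def)
    finally show "x * i \<in> R" .
  qed
qed

lemma one_in_qf: "subring R \<Longrightarrow> 1 \<in> qf R"
  unfolding qf_def subring_def by (rule CollectI, rule exI[of _ 1], rule exI[of _ 1]) simp

lemma vtrick:
  assumes R: "subring R" and q: "qf R = UNIV" and m: "t_ideal R m" "m \<noteq> R"
    and S: "finite S" "S \<subseteq> m" "s0 \<in> S" "s0 \<noteq> 0"
    and c: "\<And>x. (\<forall>s\<in>S. x * s \<in> R) \<Longrightarrow> x \<in> R"
  shows False
proof -
  define J where "J = rspan R S"
  have fg: "fin_gen R J" unfolding fin_gen_def J_def using S q by blast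
  have Jm: "J \<subseteq> m" unfolding J_def using m S by (intro rspan_sub_ideal) (auto simp: t_ideal_def)
  have "1 \<in> v_op R J" unfolding v_op_def colon_def
  proof (intro CollectI conjI ballI)
    show "1 \<in> qf R" using q by simp
    fix y assume "y \<in> {x \<in> qf R. \<forall>i\<in>J. x * i \<in> R}"
    hence "y \<in> colon R (rspan R S)" unfolding colon_def J_def by simp
    hence "y \<in> R" using colon_rspan[OF R S(1)] c by blast
    thus "1 * y \<in> R" by simp
  qed
  hence one: "1 \<in> t_op R m" unfolding t_op_def using fg Jm by blast
  have "m \<noteq> {0}" using S by auto
  hence "m = t_op R m" using m unfolding t_ideal_def by blast
  hence "1 \<in> m" using one by simp
  hence "R \<subseteq> m" using m unfolding t_ideal_def is_ideal_def by (metis mult.right_neutral subsetI)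
  thus False using m unfolding t_ideal_def is_ideal_def by blast
qed

lemma t_op_sup: assumes R: "subring R" and q: "qf R = UNIV" and I: "is_ideal R I" shows "I \<subseteq> t_op R I"
proof
  fix x assume x: "x \<in> I"
  define J where "J = rspan R {x}"
  have fg: "fin_gen R J" unfolding fin_gen_def J_def using q by blast
  have "J \<subseteq> I" unfolding J_def using I x by (intro rspan_sub_ideal) auto
  moreover have "x \<in> v_op R J" unfolding v_op_def
  proof -
    have "\<forall>y\<in>colon R J. x * y \<in> R"
      unfolding J_def using colon_rspan[OF R, of "{x}"] by (auto simp: mult.commute)
    thus "x \<in> colon R (colon R J)" unfolding colon_def using q by blast
  qed
  ultimately show "x \<in> t_op R I" unfolding t_op_def using fg by blast
qed

lemma tmax_one: assumes "t_maximal R m" shows "1 \<notin> m"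
proof
  assume "1 \<in> m"
  hence "R \<subseteq> m" using assms unfolding t_maximal_def t_ideal_def is_ideal_def by (metis mult.right_neutral subsetI)
  thus False using assms unfolding t_maximal_def t_ideal_def is_ideal_def by blast
qed

lemma tmax_prime:
  assumes R: "subring R" and q: "qf R = UNIV" and m: "t_maximal R m"
    and ab: "a \<in> R" "b \<in> R" "a * b \<in> m" and na: "a \<notin> m"
  shows "b \<in> m"
proof (cases "m = {0}")
  case True
  hence "a = 0 \<or> b = 0" using ab by simp
  moreover have "0 \<in> m" using True by simp
  ultimately show ?thesis using na by auto
next
  case False
  have mi: "is_ideal R m" using m unfolding t_maximal_def t_ideal_def by blast
  have mt: "m = t_op R m" using m False unfolding t_maximal_def t_ideal_def by blast
  have a0: "a \<noteq> 0" using na mi unfolding is_ideal_def by auto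
  define N where "N = {x \<in> R. x * a \<in> m}"
  have NI: "is_ideal R N" using mi ab(1) R unfolding is_ideal_def N_def subring_def
    by (auto simp: algebra_simps)
  have mN: "m \<subseteq> N" using mi ab(1) unfolding N_def is_ideal_def by (auto simp: mult.commute)
  have "t_op R N \<subseteq> N"
  proof
    fix z assume "z \<in> t_op R N"
    then obtain J where J: "fin_gen R J" "J \<subseteq> N" "z \<in> v_op R J" unfolding t_op_def by blast
    then obtain S where S: "finite S" "J = rspan R S" unfolding fin_gen_def by blast
    have SJ: "S \<subseteq> J" using rspan_mem[OF R S(1)] S(2) by blast
    define J' where "J' = rspan R ((\<lambda>s. a * s) ` S)"
    have fg': "fin_gen R J'" unfolding fin_gen_def J'_def using S q by blast
    have J'm: "J' \<subseteq> m" unfolding J'_def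
    proof (rule rspan_sub_ideal[OF mi])
      show "(*) a ` S \<subseteq> m" using SJ J(2) unfolding N_def by (auto simp: mult.commute)
    qed
    have zR: "z \<in> R"
    proof -
      have "1 \<in> colon R J" using J(2) q unfolding colon_def N_def by auto
      thus ?thesis using J(3) unfolding v_op_def colon_def by force
    qed
    have "a * z \<in> v_op R J'" unfolding v_op_def
    proof -
      have "\<forall>y\<in>colon R J'. (a * z) * y \<in> R"
      proof
        fix y assume y: "y \<in> colon R J'"
        have "y * a \<in> colon R J"
          unfolding S(2) colon_rspan[OF R S(1)]
        proof (intro conjI ballI)
          show "y * a \<in> qf R" using q by simp
          fix s assume "s \<in> S"
          hence "y * (a * s) \<in> R" using y colon_rspan[OF R, of "(\<lambda>s. a * s) ` S"] S(1) unfolding J'_def by blast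
          thus "y * a * s \<in> R" by (simp add: mult.assoc)
        qed
        hence "z * (y * a) \<in> R" using J(3) unfolding v_op_def colon_def by blast
        thus "(a * z) * y \<in> R" by (simp add: algebra_simps)
      qed
      thus "a * z \<in> colon R (colon R J')" unfolding colon_def using q by blast
    qed
    hence "a * z \<in> t_op R m" unfolding t_op_def using fg' J'm by blast
    hence "a * z \<in> m" using mt by simp
    thus "z \<in> N" using zR unfolding N_def by (simp add: mult.commute)
  qed
  moreover have "N \<noteq> {0}" using mN False mi unfolding is_ideal_def by blast
  ultimately have NT: "t_ideal R N" using NI t_op_sup[OF R q NI] unfolding t_ideal_def by blast
  have "1 \<notin> N" using na unfolding N_def by simp
  hence "N \<noteq> R" using R unfolding subring_def by blast
  hence "N = m" using m NT mN unfolding t_maximal_def by blast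
  moreover have "b \<in> N" using ab unfolding N_def by (simp add: mult.commute)
  ultimately show ?thesis by simp
qed


definition kap :: "'a::idom \<Rightarrow> 'a poly fract" where "kap a = Fract [:a:] 1"

lemma kap_simps: "kap (a+b) = kap a + kap b" "kap (a*b) = kap a * kap b" "kap 0 = 0" "kap 1 = 1"
  "kap (-a) = - kap a"
  by (simp_all add: kap_def fract_collapse one_pCons[symmetric] mult.commute)
lemma kap_inverse: "kap (inverse (a::'a::field)) = inverse (kap a)"
  by (cases "a = 0") (simp_all add: kap_def fract_collapse eq_fract)
lemma kap_eq0: "kap (a::'a::idom) = 0 \<longleftrightarrow> a = 0"
  by (simp add: kap_def Fract1_0)
lemma kap_inj: "kap (a::'a::idom) = kap b \<longleftrightarrow> a = b"
  by (simp add: kap_def Fract1_eq)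
lemma kap_pow: "kap (a ^ n) = kap a ^ n"
  by (induct n) (simp_all add: kap_simps)
lemma kap_sum: "kap (sum f I) = (\<Sum>i\<in>I. kap (f i))"
  by (induct I rule: infinite_finite_induct) (simp_all add: kap_simps)
lemma emb_kap: "emb (kap r) = kap (of_rat r)"
  by (simp add: kap_def emb_Fract1 hq_def map_poly_pCons)

definition XF :: "'a::idom poly fract" where "XF = Fract [:0,1:] 1"

lemma pCons_split: "Fract (pCons a f) 1 = kap a + XF * Fract f 1"
  by (simp add: kap_def XF_def)

lemma polyW: assumes W: "subring W" "XF \<in> W" and c: "\<And>i. kap (coeff f i) \<in> W"
  shows "Fract f 1 \<in> W"
  using c
proof (induct f)
  case 0 thus ?case using W by (simp add: subring_def fract_collapse)
next
  case (pCons a f)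
  have "kap a \<in> W" using pCons(3)[of 0] by simp
  moreover have "Fract f 1 \<in> W" using pCons(2) pCons(3)[of "Suc i" for i] by simp
  ultimately show ?case using W unfolding pCons_split subring_def by blast
qed

lemma constset: fixes W :: "'a::field poly fract set" assumes W: "valuation_domain W" and A: "finite A"
  shows "\<exists>c. c \<noteq> 0 \<and> (\<forall>a\<in>A. kap (c * a) \<in> W)"
  using A
proof (induct A)
  case empty show ?case by (intro exI[of _ 1]) simp
next
  case (insert a A)
  then obtain c where c: "c \<noteq> 0" "\<forall>b\<in>A. kap (c * b) \<in> W" by blast
  have sW: "subring W" and vW: "\<And>x. x \<noteq> 0 \<Longrightarrow> x \<in> W \<or> inverse x \<in> W"
    using W unfolding valuation_domain_def valuation_domain_in_def by auto
  show ?case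
  proof (cases "kap (c * a) \<in> W")
    case True thus ?thesis using c by auto
  next
    case False
    hence a0: "a \<noteq> 0" using sW by (auto simp: kap_simps subring_def)
    have "kap (c*a) \<noteq> 0" using False sW by (auto simp: subring_def)
    hence iW: "inverse (kap (c*a)) \<in> W" using vW[of "kap (c*a)"] False by blast
    have "\<forall>b\<in>insert a A. kap (inverse a * b) \<in> W"
    proof
      fix b assume "b \<in> insert a A"
      thus "kap (inverse a * b) \<in> W"
      proof
        assume "b = a" thus ?thesis using a0 sW by (simp add: kap_simps subring_def)
      next
        assume "b \<in> A"
        hence "kap (c * b) * inverse (kap (c*a)) \<in> W" using c iW sW by (simp add: subring_def)
        moreover have "c * b * inverse (c*a) = inverse a * b" using a0 c(1) by (simp add: field_simps)
        hence "kap (c * b) * inverse (kap (c*a)) = kap (inverse a * b)"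
          by (metis kap_inverse kap_simps(2))
        ultimately show ?thesis by simp
      qed
    qed
    thus ?thesis using a0 by (intro exI[of _ "inverse a"]) simp
  qed
qed

lemma poly_part_iff: "x \<in> poly_part W \<longleftrightarrow> (\<exists>p. x = Fract p 1) \<and> x \<in> W"
  unfolding poly_part_def by blast

lemma poly_part_subring: assumes "subring W" shows "subring (poly_part W)"
  unfolding subring_def
proof (intro conjI ballI)
  show "0 \<in> poly_part W" using assms unfolding poly_part_iff subring_def by (metis Zero_fract_def)
  show "1 \<in> poly_part W" using assms unfolding poly_part_iff subring_def by (metis One_fract_def)
  fix x y assume x: "x \<in> poly_part W" and y: "y \<in> poly_part W"
  then obtain p q where pq: "x = Fract p 1" "y = Fract q 1" "x \<in> W" "y \<in> W" unfolding poly_part_iff by blast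
  show "x + y \<in> poly_part W" using pq assms unfolding poly_part_iff subring_def by (metis Fract1_add)
  show "x * y \<in> poly_part W" using pq assms unfolding poly_part_iff subring_def by (metis Fract1_mult)
  show "- x \<in> poly_part W" using pq assms unfolding poly_part_iff subring_def by (metis Fract1_minus)
qed

lemma coeff_in_W: fixes W :: "'a::field poly fract set" assumes W: "valuation_domain W" "XF \<in> W"
  shows "\<exists>c. c \<noteq> 0 \<and> Fract (smult c f) 1 \<in> W \<and> Fract (smult c g) 1 \<in> W"
proof -
  have sW: "subring W" using W unfolding valuation_domain_def valuation_domain_in_def by auto
  define A where "A = coeff f ` {..degree f} \<union> coeff g ` {..degree g}"
  obtain c where c: "c \<noteq> 0" "\<forall>a\<in>A. kap (c * a) \<in> W" using constset[OF W(1), of A] A_def by auto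
  have "kap (coeff (smult c h) i) \<in> W" if "h = f \<or> h = g" for h i
  proof (cases "i \<le> degree h")
    case True thus ?thesis using that c unfolding A_def by auto
  next
    case False thus ?thesis using sW by (simp add: coeff_eq_0 kap_simps subring_def)
  qed
  thus ?thesis using c(1) polyW[OF sW W(2)] by blast
qed

lemma qf_poly_part: fixes W :: "'a::field poly fract set" assumes W: "valuation_domain W" "XF \<in> W"
  shows "qf (poly_part W) = UNIV"
proof -
  have "y \<in> qf (poly_part W)" for y
  proof (cases y)
    case (Fract f g)
    obtain c where c: "c \<noteq> 0" "Fract (smult c f) 1 \<in> W" "Fract (smult c g) 1 \<in> W"
      using coeff_in_W[OF W] by blast
    have "Fract (smult c f) 1 / Fract (smult c g) 1 = Fract ([:c:]*f) ([:c:]*g)" by simp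
    also have "\<dots> = y" using Fract c(1) by (simp add: eq_fract)
    finally have "y = Fract (smult c f) 1 / Fract (smult c g) 1" by simp
    moreover have "Fract (smult c g) 1 \<noteq> 0" using Fract c(1) by (simp add: Fract1_0)
    moreover have "Fract (smult c f) 1 \<in> poly_part W" using c(2) unfolding poly_part_iff by blast
    moreover have "Fract (smult c g) 1 \<in> poly_part W" using c(3) unfolding poly_part_iff by blast
    ultimately show ?thesis unfolding qf_def by blast
  qed
  thus ?thesis by auto
qed


definition TT :: "'a::idom fract set" where "TT = {Fract p 1 | p. True}"

lemma TT_subring: "subring (TT :: 'a::idom fract set)"
  unfolding subring_def
proof (intro conjI ballI)
  show "0 \<in> (TT :: 'a fract set)" unfolding TT_def by (metis (mono_tags, lifting) Zero_fract_def mem_Collect_eq)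
  show "1 \<in> (TT :: 'a fract set)" unfolding TT_def by (metis (mono_tags, lifting) fract_collapse(2) mem_Collect_eq)
  fix x y :: "'a fract" assume "x \<in> TT" "y \<in> TT"
  then obtain p q where pq: "x = Fract p 1" "y = Fract q 1" unfolding TT_def by blast
  show "x + y \<in> TT" "x * y \<in> TT" "- x \<in> TT" unfolding TT_def pq by (auto simp: Fract1_add Fract1_mult)
qed
lemma TT_Fract: "Fract p 1 \<in> TT" unfolding TT_def by blast
lemma emb_TT: "x \<in> TT \<Longrightarrow> emb x \<in> TT" unfolding TT_def by (auto simp: emb_Fract1)
lemma kap_TT: "kap a \<in> TT" unfolding kap_def by (rule TT_Fract)

lemma spanT:
  fixes S :: "'k::field_char_0 set"
  assumes S: "finite S" "\<forall>x. \<exists>c. x = (\<Sum>s\<in>S. of_rat (c s) * s)"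
  shows "\<exists>u. Fract f 1 = (\<Sum>v\<in>kap ` S. emb (u v) * v)"
proof -
  have "\<forall>i. \<exists>c. coeff f i = (\<Sum>s\<in>S. of_rat (c s) * s)" using S(2) by blast
  then obtain cf where cf: "\<And>i. coeff f i = (\<Sum>s\<in>S. of_rat (cf i s) * s)" by metis
  define P where "P s = (\<Sum>i\<le>degree f. monom (cf i s) i)" for s
  have coeffP: "coeff (P s) n = (if n \<le> degree f then cf n s else 0)" for s n
    unfolding P_def by (simp add: coeff_sum coeff_monom)
  have feq: "f = (\<Sum>s\<in>S. hq (P s) * [:s:])"
  proof (rule poly_eqI)
    fix n
    have "coeff (\<Sum>s\<in>S. hq (P s) * [:s:]) n = (\<Sum>s\<in>S. of_rat (coeff (P s) n) * s)"
      by (simp add: coeff_sum hq_def coeff_map_poly mult.commute)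
    also have "\<dots> = coeff f n"
      by (cases "n \<le> degree f") (simp_all add: coeffP cf[symmetric] coeff_eq_0)
    finally show "coeff f n = coeff (\<Sum>s\<in>S. hq (P s) * [:s:]) n" by simp
  qed
  have "Fract f 1 = (\<Sum>s\<in>S. emb (Fract (P s) 1) * kap s)"
    by (subst feq) (simp add: Fract1_sum emb_Fract1 kap_def)
  also have "\<dots> = (\<Sum>v\<in>kap ` S. emb (Fract (P (inv_into S kap v)) 1) * v)"
  proof -
    have inj: "inj_on kap S" by (simp add: inj_on_def kap_inj)
    show ?thesis by (simp add: sum.reindex[OF inj] inv_into_f_f[OF inj])
  qed
  finally show ?thesis by (rule_tac x="\<lambda>v. Fract (P (inv_into S kap v)) 1" in exI)
qed

lemma C1rel:
  fixes c0 :: "'k::field_char_0"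
  assumes "finite_ext_Q TYPE('k)" "c0 \<noteq> 0"
  shows "\<exists>a cc e (I::nat set). finite I \<and> a \<noteq> 0 \<and> of_rat a + c0 * (\<Sum>i\<in>I. of_rat (cc i) * c0 ^ (e i)) = 0"
proof -
  obtain S :: "'k set" where S: "finite S" "\<forall>x. \<exists>c. x = (\<Sum>s\<in>S. of_rat (c s) * s)"
    using assms(1) unfolding finite_ext_Q_def by blast
  show ?thesis
    by (rule alg_rel[of of_rat S c0]) (use S assms(2) in \<open>auto simp: of_rat_add of_rat_mult\<close>)
qed

lemma C2rel:
  fixes g :: "'k::field_char_0 poly"
  assumes "finite_ext_Q TYPE('k)" "Fract g 1 \<noteq> 0"
  shows "\<exists>a cc e (I::nat set). finite I \<and> a \<noteq> 0 \<and> emb a + Fract g 1 * (\<Sum>i\<in>I. emb (cc i) * Fract g 1 ^ (e i)) = 0"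
proof -
  obtain S :: "'k set" where S: "finite S" "\<forall>x. \<exists>c. x = (\<Sum>s\<in>S. of_rat (c s) * s)"
    using assms(1) unfolding finite_ext_Q_def by blast
  show ?thesis
  proof (rule alg_rel[of emb "kap ` S" "Fract g 1"])
    show "\<exists>u. Fract g 1 ^ i = (\<Sum>v\<in>kap ` S. emb (u v) * v)" for i
      unfolding Fract1_pow using spanT[OF S] by blast
  qed (use S assms(2) in \<open>auto simp: emb_add emb_mult emb_one\<close>)
qed

lemma clear_den: assumes "finite (A :: 'a::idom fract set)"
  shows "\<exists>D. D \<noteq> 0 \<and> D \<in> TT \<and> (\<forall>a\<in>A. D * a \<in> TT)"
  using assms
proof (induct A)
  case empty
  have "(1::'a fract) \<in> TT" using TT_subring[where 'a='a] unfolding subring_def by blast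
  thus ?case by (intro exI[of _ 1]) simp
next
  case (insert x A)
  then obtain D where D: "D \<noteq> 0" "D \<in> TT" "\<forall>a\<in>A. D * a \<in> TT" by blast
  obtain p q where x: "x = Fract p q" "q \<noteq> 0" by (cases x) auto
  define D' where "D' = D * Fract q 1"
  have "D' \<noteq> 0" using D x by (simp add: D'_def Fract1_0)
  moreover have "D' \<in> TT" using D(2) TT_subring TT_Fract unfolding D'_def subring_def by blast
  moreover have "D' * x \<in> TT"
  proof -
    have "D' * x = D * Fract p 1" using x by (simp add: D'_def eq_fract mult.assoc)
    thus ?thesis using D(2) TT_subring TT_Fract unfolding subring_def by metis
  qed
  moreover have "\<forall>a\<in>A. D' * a \<in> TT"
  proof
    fix a assume "a \<in> A"
    hence "D * a * Fract q 1 \<in> TT" using D(3) TT_subring TT_Fract unfolding subring_def by blast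
    thus "D' * a \<in> TT" by (simp add: D'_def mult_ac)
  qed
  ultimately show ?case by blast
qed

lemma C2poly:
  fixes g :: "'k::field_char_0 poly"
  assumes "finite_ext_Q TYPE('k)" "Fract g 1 \<noteq> 0"
  shows "\<exists>g' Q0. g' \<in> TT \<and> Q0 \<in> TT \<and> Q0 \<noteq> 0 \<and> Fract g 1 * g' = emb Q0"
proof -
  obtain a cc e and I :: "nat set" where r: "finite I" "a \<noteq> 0"
    "emb a + Fract g 1 * (\<Sum>i\<in>I. emb (cc i) * Fract g 1 ^ (e i)) = 0"
    using C2rel[OF assms] by blast
  obtain D where D: "D \<noteq> 0" "D \<in> TT" "\<forall>b\<in>insert a (cc ` I). D * b \<in> TT"
    using clear_den[of "insert a (cc ` I)"] r(1) by blast
  define g' where "g' = (\<Sum>i\<in>I. emb (D * cc i) * Fract g 1 ^ (e i))"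
  have sT: "subring (TT::'k poly fract set)" by (rule TT_subring)
  have "emb (D * cc i) * Fract g 1 ^ (e i) \<in> TT" if "i \<in> I" for i
  proof -
    have "emb (D * cc i) \<in> TT" using D(3) that by (intro emb_TT) auto
    moreover have "Fract g 1 ^ (e i) \<in> TT" by (rule subring_pow[OF sT TT_Fract])
    ultimately show ?thesis using sT unfolding subring_def by blast
  qed
  hence "g' \<in> TT" unfolding g'_def by (intro subring_sum[OF sT])
  moreover have "Fract g 1 * g' = emb (- (D * a))"
  proof -
    have "Fract g 1 * g' = emb D * (Fract g 1 * (\<Sum>i\<in>I. emb (cc i) * Fract g 1 ^ (e i)))"
      unfolding g'_def by (simp add: emb_mult sum_distrib_left mult_ac)
    also have "\<dots> = emb D * (- emb a)"
    proof -
      have "Fract g 1 * (\<Sum>i\<in>I. emb (cc i) * Fract g 1 ^ (e i)) = - emb a"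
        using r(3) by (simp add: eq_neg_iff_add_eq_0 add.commute)
      thus ?thesis by simp
    qed
    finally show ?thesis by (simp add: emb_mult emb_minus)
  qed
  moreover have "- (D * a) \<in> TT" using D TT_subring[where 'a="rat poly"] unfolding subring_def by blast
  moreover have "- (D * a) \<noteq> 0" using D r by simp
  ultimately show ?thesis by blast
qed


section \<open>Localization\<close>

lemma loc_mem: "a \<in> R \<Longrightarrow> s \<in> R \<Longrightarrow> s \<notin> m \<Longrightarrow> a / s \<in> localize R m"
  unfolding localize_def by blast

lemma loc_sub: "subring R \<Longrightarrow> 1 \<notin> m \<Longrightarrow> a \<in> R \<Longrightarrow> a \<in> localize R m"
  using loc_mem[of a R 1 m] by (simp add: subring_def)

definition primeI :: "'f::field set \<Rightarrow> 'f set \<Rightarrow> bool" where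
  "primeI R m \<longleftrightarrow> is_ideal R m \<and> 1 \<notin> m \<and> (\<forall>a\<in>R. \<forall>b\<in>R. a * b \<in> m \<longrightarrow> a \<in> m \<or> b \<in> m)"

lemma primeI_nz: "primeI R m \<Longrightarrow> s \<notin> m \<Longrightarrow> s \<noteq> 0"
  unfolding primeI_def is_ideal_def by auto

lemma primeI_mult: "primeI R m \<Longrightarrow> a \<in> R \<Longrightarrow> b \<in> R \<Longrightarrow> a \<notin> m \<Longrightarrow> b \<notin> m \<Longrightarrow> a * b \<notin> m"
  unfolding primeI_def by blast

lemma loc_subring: assumes R: "subring R" and m: "primeI R m" shows "subring (localize R m)"
  unfolding subring_def
proof (intro conjI ballI)
  have one: "1 \<notin> m" using m unfolding primeI_def by blast
  show "0 \<in> localize R m" using loc_sub[OF R one] R by (simp add: subring_def)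
  show "1 \<in> localize R m" using loc_sub[OF R one] R by (simp add: subring_def)
  fix x y assume "x \<in> localize R m" "y \<in> localize R m"
  then obtain a s b t where x: "x = a / s" "a \<in> R" "s \<in> R" "s \<notin> m" and y: "y = b / t" "b \<in> R" "t \<in> R" "t \<notin> m"
    unfolding localize_def by blast
  have s0: "s \<noteq> 0" "t \<noteq> 0" using primeI_nz[OF m] x y by auto
  have st: "s * t \<in> R" "s * t \<notin> m" using primeI_mult[OF m] x y R by (auto simp: subring_def)
  have "x + y = (a * t + b * s) / (s * t)" using s0 x y by (simp add: field_simps)
  moreover have "a * t + b * s \<in> R" using x y R by (simp add: subring_def)
  ultimately show "x + y \<in> localize R m" using loc_mem st by metis
  have "x * y = (a * b) / (s * t)" using s0 x y by (simp add: field_simps)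
  moreover have "a * b \<in> R" using x y R by (simp add: subring_def)
  ultimately show "x * y \<in> localize R m" using loc_mem st by metis
  have "- x = (- a) / s" using x by simp
  moreover have "- a \<in> R" using x R by (simp add: subring_def)
  ultimately show "- x \<in> localize R m" using loc_mem x by metis
qed

lemma loc_inv: assumes m: "primeI R m" and x: "x = a / s" "a \<in> R" "s \<in> R" "s \<notin> m"
  and ni: "inverse x \<notin> localize R m" shows "a \<in> m"
proof (rule ccontr)
  assume "a \<notin> m"
  hence "s / a \<in> localize R m" using x loc_mem by metis
  moreover have "inverse x = s / a" using x by simp
  ultimately show False using ni by simp
qed

lemma loc_local: assumes R: "subring R" and m: "primeI R m"
  and L: "x \<in> localize R m" "z \<in> localize R m" "p \<in> localize R m" "q \<in> localize R m"
  and eq: "p * x + q * z = 1"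
  shows "inverse x \<in> localize R m \<or> inverse z \<in> localize R m"
proof (rule ccontr)
  assume nn: "\<not> (inverse x \<in> localize R m \<or> inverse z \<in> localize R m)"
  obtain a s where x: "x = a / s" "a \<in> R" "s \<in> R" "s \<notin> m" using L(1) unfolding localize_def by blast
  obtain a' s' where z: "z = a' / s'" "a' \<in> R" "s' \<in> R" "s' \<notin> m" using L(2) unfolding localize_def by blast
  obtain b t where p: "p = b / t" "b \<in> R" "t \<in> R" "t \<notin> m" using L(3) unfolding localize_def by blast
  obtain b' t' where q: "q = b' / t'" "b' \<in> R" "t' \<in> R" "t' \<notin> m" using L(4) unfolding localize_def by blast
  have am: "a \<in> m" using loc_inv[OF m x] nn by blast
  have am': "a' \<in> m" using loc_inv[OF m z] nn by blast
  have nz: "s \<noteq> 0" "s' \<noteq> 0" "t \<noteq> 0" "t' \<noteq> 0" using primeI_nz[OF m] x z p q by auto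
  have "s * s' * t * t' = b * a * t' * s' + b' * a' * t * s"
    using eq nz unfolding x p z q by (simp add: field_simps)
  moreover have "b * a * t' * s' + b' * a' * t * s \<in> m"
  proof -
    have mi: "is_ideal R m" using m unfolding primeI_def by blast
    have "(b * t' * s') * a \<in> m" "(b' * t * s) * a' \<in> m"
      using mi am am' R p q x z unfolding is_ideal_def subring_def by auto
    thus ?thesis using mi unfolding is_ideal_def by (simp add: mult_ac)
  qed
  moreover have "s * s' * t * t' \<notin> m"
  proof -
    have "s * s' \<in> R" "s * s' \<notin> m" using primeI_mult[OF m] R x z by (auto simp: subring_def)
    moreover have "s * s' * t \<in> R" "s * s' * t \<notin> m" using calculation primeI_mult[OF m] R p by (auto simp: subring_def)
    ultimately show ?thesis using primeI_mult[OF m] q by auto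
  qed
  ultimately show False by simp
qed

lemma euclid: "\<exists>d f1 g1 u w. f = d * f1 \<and> g = d * g1 \<and> u * f1 + w * g1 = (1::'a::field poly)"
proof (induction g arbitrary: f rule: measure_induct_rule[where f="\<lambda>g. if g = 0 then 0 else Suc (degree g)"])
  case (less g)
  show ?case
  proof (cases "g = 0")
    case True thus ?thesis by (intro exI[of _ f] exI[of _ 1] exI[of _ 0]) simp
  next
    case False
    have lt: "(if f mod g = 0 then 0 else Suc (degree (f mod g))) < (if g = 0 then 0 else Suc (degree g))"
      using False degree_mod_less'[OF False] by auto
    obtain d g1 r1 u w where IH: "g = d * g1" "f mod g = d * r1" "u * g1 + w * r1 = 1"
      using less[OF lt, of g] by blast
    have "f = (f div g) * g + f mod g" by simp
    hence "f = d * ((f div g) * g1 + r1)" using IH by (simp add: algebra_simps)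
    moreover have "w * ((f div g) * g1 + r1) + (u - w * (f div g)) * g1 = 1" using IH(3) by (simp add: algebra_simps)
    ultimately show ?thesis using IH(1) by blast
  qed
qed

section \<open>Valuation facts\<close>

lemma v_one: assumes vm: "\<forall>x y. x \<noteq> 0 \<longrightarrow> y \<noteq> 0 \<longrightarrow> v (x * y) = v x + v y"
  shows "v (1::'a::field) = (0::int)"
  using vm[rule_format, of 1 1] by simp

lemma v_inv: assumes vm: "\<forall>x y. x \<noteq> 0 \<longrightarrow> y \<noteq> 0 \<longrightarrow> v (x * y) = v x + v y" and x: "(x::'a::field) \<noteq> 0"
  shows "v (inverse x) = - (v x :: int)"
  using vm[rule_format, of x "inverse x"] x v_one[OF vm] by simp

lemma v_pow: assumes vm: "\<forall>x y. x \<noteq> 0 \<longrightarrow> y \<noteq> 0 \<longrightarrow> v (x * y) = v x + v y" and x: "(x::'a::field) \<noteq> 0"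
  shows "v (x ^ k) = int k * (v x :: int)"
proof (induct k)
  case 0 thus ?case using v_one[OF vm] by simp
next
  case (Suc k) thus ?case using vm x by (simp add: algebra_simps)
qed


lemma C1W:
  fixes W :: "'k::field_char_0 poly fract set" and c0 :: 'k
  assumes fe: "finite_ext_Q TYPE('k)" and sW: "subring W" and vW: "\<And>x. x \<noteq> 0 \<Longrightarrow> x \<in> W \<or> inverse x \<in> W"
    and c: "c0 \<noteq> 0" "kap c0 \<in> W" "inverse (kap c0) \<notin> W"
  shows "\<exists>r. kap (of_rat r) \<in> W \<and> inverse (kap (of_rat r)) \<notin> W"
proof (rule ccontr)
  assume "\<not> ?thesis"
  hence H: "\<And>r. kap (of_rat r) \<in> W \<Longrightarrow> inverse (kap (of_rat r)) \<in> W" by blast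
  have allW: "kap (of_rat r) \<in> W" for r
  proof (cases "r = 0")
    case True thus ?thesis using sW by (simp add: kap_simps subring_def)
  next
    case False
    hence "kap (of_rat r) \<noteq> 0" by (simp add: kap_eq0)
    hence "kap (of_rat r) \<in> W \<or> inverse (kap (of_rat r)) \<in> W" using vW by blast
    moreover have "inverse (kap (of_rat r)) = kap (of_rat (inverse r))" by (simp add: kap_inverse of_rat_inverse)
    ultimately show ?thesis using H[of "inverse r"] by (auto simp: kap_inverse of_rat_inverse)
  qed
  obtain a cc e and I :: "nat set" where r: "finite I" "a \<noteq> 0"
    "of_rat a + c0 * (\<Sum>i\<in>I. of_rat (cc i) * c0 ^ (e i)) = 0"
    using C1rel[OF fe c(1)] by blast
  define Y where "Y = (\<Sum>i\<in>I. kap (of_rat (cc i)) * kap c0 ^ (e i))"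
  have "kap (of_rat (cc i)) * kap c0 ^ (e i) \<in> W" for i
    using allW[of "cc i"] subring_pow[OF sW c(2), of "e i"] sW unfolding subring_def by blast
  hence YW: "Y \<in> W" unfolding Y_def by (intro subring_sum[OF sW])
  have "kap (of_rat a + c0 * (\<Sum>i\<in>I. of_rat (cc i) * c0 ^ (e i))) = kap (of_rat a) + kap c0 * Y"
    unfolding Y_def by (simp add: kap_simps kap_sum kap_pow)
  hence eq: "kap (of_rat a) + kap c0 * Y = 0" using r(3) by (simp add: kap_simps)
  have a0: "kap (of_rat a) \<noteq> 0" using r(2) by (simp add: kap_eq0)
  have "inverse (kap c0) = - Y * inverse (kap (of_rat a))"
  proof -
    have "kap (of_rat a) = - (kap c0 * Y)" using eq by (simp add: eq_neg_iff_add_eq_0)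
    moreover have "Y \<noteq> 0" using eq a0 by auto
    moreover have "kap c0 \<noteq> 0" using c(1) by (simp add: kap_eq0)
    ultimately show ?thesis by (simp add: field_simps)
  qed
  moreover have "- Y * inverse (kap (of_rat a)) \<in> W" using YW H[OF allW] sW by (simp add: subring_def)
  ultimately show False using c(3) by simp
qed

lemma NormW:
  fixes W :: "'k::field_char_0 poly fract set" and V :: "rat poly fract set" and v :: "rat poly fract \<Rightarrow> int"
  assumes fe: "finite_ext_Q TYPE('k)"
    and ext: "\<And>x. x \<in> V \<longleftrightarrow> emb x \<in> W"
    and Vd: "V = {x. x = 0 \<or> v x \<ge> 0}"
    and vm: "\<forall>x y. x \<noteq> 0 \<longrightarrow> y \<noteq> 0 \<longrightarrow> v (x * y) = v x + v y"
    and r: "r \<noteq> 0" "v (kap r) > 0"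
    and G: "Fract g 1 \<noteq> 0"
  shows "\<exists>u\<in>TT. Fract g 1 * u \<noteq> 0 \<and> Fract g 1 * u \<in> W \<and> inverse (Fract g 1 * u) \<in> W"
proof -
  obtain g' Q0 where gq: "g' \<in> TT" "Q0 \<in> TT" "Q0 \<noteq> 0" "Fract g 1 * g' = emb Q0"
    using C2poly[OF fe G] by blast
  define n where "n = v Q0"
  define e0 where "e0 = v (kap r)"
  define rF where "rF = kap r"
  have rF0: "rF \<noteq> 0" using r by (simp add: rF_def kap_eq0)
  define z where "z = Q0 ^ (nat e0 - 1) * (if n \<ge> 0 then inverse rF ^ nat n else rF ^ nat (- n))"
  have sTQ: "subring (TT :: rat poly fract set)" by (rule TT_subring)
  have rT: "rF \<in> TT" "inverse rF \<in> TT" unfolding rF_def by (simp_all add: kap_TT kap_inverse[symmetric])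
  have zT: "z \<in> TT" unfolding z_def using sTQ gq(2) rT
    by (auto simp: subring_def intro!: subring_pow[OF sTQ])
  have z0: "z \<noteq> 0" unfolding z_def using gq(3) rF0 by simp
  have vz: "v (Q0 * z) = 0"
  proof -
    have e1: "e0 \<ge> 1" using r e0_def by simp
    have A: "v (Q0 * Q0 ^ (nat e0 - 1)) = e0 * n"
    proof -
      have "nat e0 = Suc (nat e0 - 1)" using e1 by simp
      hence "Q0 * Q0 ^ (nat e0 - 1) = Q0 ^ (nat e0)" by (metis power_Suc)
      thus ?thesis using v_pow[OF vm gq(3), of "nat e0"] e1 n_def by simp
    qed
    show ?thesis
    proof (cases "n \<ge> 0")
      case True
      have "v (inverse rF ^ nat n) = int (nat n) * (- e0)"
        using v_pow[OF vm, of "inverse rF" "nat n"] v_inv[OF vm rF0] rF0 e0_def rF_def by simp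
      moreover have "Q0 * z = (Q0 * Q0 ^ (nat e0 - 1)) * (inverse rF ^ nat n)" using True unfolding z_def by (simp add: mult.assoc)
      moreover have "Q0 * Q0 ^ (nat e0 - 1) \<noteq> 0" using gq(3) by simp
      moreover have "inverse rF ^ nat n \<noteq> 0" using rF0 by simp
      ultimately show ?thesis using vm A True by (simp add: algebra_simps)
    next
      case False
      have "v (rF ^ nat (- n)) = int (nat (- n)) * e0"
        using v_pow[OF vm rF0, of "nat (-n)"] e0_def rF_def by simp
      moreover have "Q0 * z = (Q0 * Q0 ^ (nat e0 - 1)) * (rF ^ nat (- n))" using False unfolding z_def by (simp add: mult.assoc)
      moreover have "Q0 * Q0 ^ (nat e0 - 1) \<noteq> 0" using gq(3) by simp
      moreover have "rF ^ nat (- n) \<noteq> 0" using rF0 by simp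
      ultimately show ?thesis using vm A False by (simp add: algebra_simps)
    qed
  qed
  have Qz0: "Q0 * z \<noteq> 0" using gq(3) z0 by simp
  have "Q0 * z \<in> V" using vz Vd by simp
  hence W1: "emb (Q0 * z) \<in> W" using ext by blast
  have "inverse (Q0 * z) \<in> V" using v_inv[OF vm Qz0] vz Vd by simp
  hence "emb (inverse (Q0 * z)) \<in> W" using ext by blast
  hence W2: "inverse (emb (Q0 * z)) \<in> W" by (simp only: emb_inverse)
  define u where "u = g' * emb z"
  have "u \<in> TT" unfolding u_def using gq(1) emb_TT[OF zT] TT_subring[where 'a="'k poly"] unfolding subring_def by blast
  moreover have "Fract g 1 * u = emb (Q0 * z)" unfolding u_def using gq(4) by (simp add: emb_mult mult.assoc[symmetric])
  moreover have "emb (Q0 * z) \<noteq> 0" using Qz0 by (simp add: emb_eq0)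
  ultimately show ?thesis using W1 W2 by metis
qed


theorem mainTheorem12:
  fixes V :: "rat poly fract set" and W :: "'k::field_char_0 poly fract set"
  assumes "finite_ext_Q TYPE('k)"
    and "DVR V"
    and "{Fract p 1 | p. \<forall>i. coeff p i \<in> \<int>} \<subseteq> V"
    and "PvMD (poly_part V)"
    and "valuation_domain W"
    and "\<forall>p q. q \<noteq> 0 \<longrightarrow>
           (Fract p q \<in> V \<longleftrightarrow> Fract (map_poly of_rat p) (map_poly of_rat q) \<in> W)"
  shows "PvMD (poly_part W)"
proof -
  let ?B = "poly_part W"
  have sW: "subring W" and vW: "\<And>x. x \<noteq> 0 \<Longrightarrow> x \<in> W \<or> inverse x \<in> W"
    using assms(5) unfolding valuation_domain_def valuation_domain_in_def by auto
  have ext: "x \<in> V \<longleftrightarrow> emb x \<in> W" for x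
  proof (cases x)
    case (Fract p q)
    thus ?thesis using assms(6) by (simp add: emb_Fract hq_def)
  qed
  have XW: "XF \<in> W"
  proof -
    have "\<forall>i. coeff [:0,1::rat:] i \<in> \<int>"
    proof
      fix i show "coeff [:0,1::rat:] i \<in> \<int>"
        by (cases i; cases "i - 1") (auto simp: coeff_pCons)
    qed
    hence "Fract [:0,1::rat:] 1 \<in> V" using assms(3) by blast
    hence "emb (Fract [:0,1::rat:] 1) \<in> W" using ext by blast
    moreover have "hq [:0,1::rat:] = ([:0,1:] :: 'k poly)" by (simp add: hq_def map_poly_pCons)
    ultimately show ?thesis by (simp add: XF_def emb_Fract1)
  qed
  have qB: "qf ?B = UNIV" by (rule qf_poly_part[OF assms(5) XW])
  have sB: "subring ?B" by (rule poly_part_subring[OF sW])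
  obtain v :: "rat poly fract \<Rightarrow> int" where
    vm: "\<forall>x y. x \<noteq> 0 \<longrightarrow> y \<noteq> 0 \<longrightarrow> v (x * y) = v x + v y" and Vd: "V = {x. x = 0 \<or> v x \<ge> 0}"
    using assms(2) unfolding DVR_def by blast
  have BT: "x \<in> ?B \<longleftrightarrow> x \<in> TT \<and> x \<in> W" for x
    unfolding poly_part_iff TT_def by blast
  have sT: "subring (TT :: 'k poly fract set)" by (rule TT_subring)
  show ?thesis unfolding PvMD_def
  proof (intro conjI allI impI)
    show "subring ?B" by (rule sB)
    fix m assume tm: "t_maximal ?B m"
    have tI: "t_ideal ?B m" and mB: "m \<noteq> ?B" using tm unfolding t_maximal_def by auto
    have mI: "is_ideal ?B m" using tI unfolding t_ideal_def by blast
    have pm: "primeI ?B m" unfolding primeI_def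
      using mI tmax_one[OF tm] tmax_prime[OF sB qB tm] by blast
    define L where "L = localize ?B m"
    have sL: "subring L" unfolding L_def by (rule loc_subring[OF sB pm])
    have val: "\<forall>y. y \<noteq> 0 \<longrightarrow> y \<in> L \<or> inverse y \<in> L"
    proof (cases "TT \<subseteq> L")
      case True
      show ?thesis
      proof (intro allI impI)
        fix y :: "'k poly fract" assume y0: "y \<noteq> 0"
        obtain f g where y: "y = Fract f g" "g \<noteq> 0" by (cases y) auto
        obtain d f1 g1 u w where e: "f = d * f1" "g = d * g1" "u * f1 + w * g1 = 1"
          using euclid[of f g] by blast
        have d0: "d \<noteq> 0" and g10: "g1 \<noteq> 0" using e y by auto
        have yy: "y = Fract f1 1 * inverse (Fract g1 1)"
          using y e d0 by (simp add: mult_fract_cancel)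
        have mem: "Fract p 1 \<in> L" for p using True TT_Fract by blast
        have "Fract u 1 * Fract f1 1 + Fract w 1 * Fract g1 1 = 1"
          using e(3) by (simp add: fract_collapse)
        hence "inverse (Fract f1 1) \<in> L \<or> inverse (Fract g1 1) \<in> L"
          using loc_local[OF sB pm] mem unfolding L_def by blast
        thus "y \<in> L \<or> inverse y \<in> L"
        proof
          assume "inverse (Fract g1 1) \<in> L"
          hence "Fract f1 1 * inverse (Fract g1 1) \<in> L" using mem[of f1] sL unfolding subring_def by blast
          thus ?thesis using yy by metis
        next
          assume a: "inverse (Fract f1 1) \<in> L"
          have "inverse y = Fract g1 1 * inverse (Fract f1 1)" using yy by (simp add: mult.commute)
          moreover have "Fract g1 1 * inverse (Fract f1 1) \<in> L" using a mem[of g1] sL unfolding subring_def by blast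
          ultimately show ?thesis by metis
        qed
      qed
    next
      case False
      then obtain t where tT: "t \<in> TT" "t \<notin> L" by blast
      then obtain f where tf: "t = Fract f 1" unfolding TT_def by blast
      obtain c0 where c0: "c0 \<noteq> 0" "\<forall>a\<in>coeff f ` {..degree f} \<union> {1}. kap (c0 * a) \<in> W"
        using constset[OF assms(5), of "coeff f ` {..degree f} \<union> {1}"] by blast
      define c where "c = kap c0"
      have cW: "c \<in> W" using c0 unfolding c_def by auto
      have cB: "c \<in> ?B" using cW kap_TT unfolding BT c_def by blast
      have c00: "c \<noteq> 0" using c0 by (simp add: c_def kap_eq0)
      have ctB: "c * t \<in> ?B"
      proof -
        have "c * t = Fract (smult c0 f) 1" by (simp add: c_def kap_def tf)
        moreover have "Fract (smult c0 f) 1 \<in> W"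
        proof (rule polyW[OF sW XW])
          fix i show "kap (coeff (smult c0 f) i) \<in> W"
          proof (cases "i \<le> degree f")
            case True thus ?thesis using c0 by auto
          next
            case False thus ?thesis using sW by (simp add: coeff_eq_0 kap_simps subring_def)
          qed
        qed
        ultimately show ?thesis unfolding BT using TT_Fract by metis
      qed
      have cm: "c \<in> m"
      proof (rule ccontr)
        assume "c \<notin> m"
        hence "(c * t) / c \<in> L" unfolding L_def using loc_mem ctB cB by metis
        moreover have "(c * t) / c = t" using c00 by simp
        ultimately show False using tT by simp
      qed
      have IIa: "inverse s \<notin> W" if sm: "s \<in> m" and s0: "s \<noteq> 0" for s
      proof
        assume isW: "inverse s \<in> W"
        show False
        proof (rule vtrick[OF sB qB tI mB, of "{c, s}" c])
          show "finite {c, s}" by simp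
          show "{c, s} \<subseteq> m" using cm sm by simp
          show "c \<in> {c, s}" by simp
          show "c \<noteq> 0" by (rule c00)
          fix x assume H: "\<forall>s'\<in>{c, s}. x * s' \<in> ?B"
          have "x * c \<in> TT" using H BT by blast
          moreover have "x = (x * c) * kap (inverse c0)" using c00 c0 by (simp add: c_def kap_inverse)
          ultimately have xT: "x \<in> TT" using sT kap_TT unfolding subring_def by metis
          have "x * s \<in> W" using H BT by blast
          moreover have "x = (x * s) * inverse s" using s0 by simp
          ultimately have "x \<in> W" using isW sW unfolding subring_def by metis
          thus "x \<in> ?B" using xT BT by blast
        qed
      qed
      have "inverse (kap c0) \<notin> W" using IIa[OF cm c00] by (simp add: c_def)
      then obtain r where r: "kap (of_rat r) \<in> W" "inverse (kap (of_rat r)) \<notin> W"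
        using C1W[OF assms(1) sW vW c0(1) cW[unfolded c_def]] by blast
      have r0: "r \<noteq> 0" using r sW by (auto simp: kap_simps subring_def)
      have rV: "kap r \<in> V" using r(1) ext by (simp add: emb_kap)
      have rV': "inverse (kap r) \<notin> V" using r(2) ext by (simp add: emb_kap emb_inverse)
      have kr0: "kap r \<noteq> 0" using r0 by (simp add: kap_eq0)
      have vr: "v (kap r) > 0"
      proof -
        have "v (kap r) \<ge> 0" using rV kr0 Vd by simp
        moreover have "v (kap r) \<noteq> 0"
        proof
          assume "v (kap r) = 0"
          hence "v (inverse (kap r)) = 0" using v_inv[OF vm kr0] by simp
          hence "inverse (kap r) \<in> V" using Vd by simp
          thus False using rV' by simp
        qed
        ultimately show ?thesis by simp
      qed
      have IId: "z \<in> L" if z0: "z \<noteq> 0" and zW: "z \<in> W" for z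
      proof -
        obtain f' g' where z: "z = Fract f' g'" "g' \<noteq> 0" by (cases z) auto
        have G0: "Fract g' 1 \<noteq> 0" using z by (simp add: Fract1_0)
        obtain u where u: "u \<in> TT" "Fract g' 1 * u \<noteq> 0" "Fract g' 1 * u \<in> W" "inverse (Fract g' 1 * u) \<in> W"
          using NormW[OF assms(1) ext Vd vm r0 vr G0] by blast
        define s where "s = Fract g' 1 * u"
        have sTT: "s \<in> TT" unfolding s_def using u(1) sT TT_Fract unfolding subring_def by blast
        have sB': "s \<in> ?B" using sTT u(3) BT s_def by blast
        have snm: "s \<notin> m" using IIa u(2) u(4) s_def by blast
        have "s * z = Fract f' 1 * u" unfolding s_def using z by (simp add: eq_fract mult_ac)
        hence "s * z \<in> TT" using u(1) sT TT_Fract unfolding subring_def by metis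
        moreover have "s * z \<in> W" using u(3) zW sW unfolding s_def subring_def by blast
        ultimately have szB: "s * z \<in> ?B" using BT by blast
        have "z = (s * z) / s" using u(2) s_def by simp
        thus ?thesis unfolding L_def using loc_mem[OF szB sB' snm] by simp
      qed
      show ?thesis
      proof (intro allI impI)
        fix y :: "'k poly fract" assume y0: "y \<noteq> 0"
        have "y \<in> W \<or> inverse y \<in> W" using vW[OF y0] .
        moreover have "inverse y \<noteq> 0" using y0 by simp
        ultimately show "y \<in> L \<or> inverse y \<in> L" using IId y0 by blast
      qed
    qed
    show "valuation_domain_in (qf ?B) (localize ?B m)"
      unfolding valuation_domain_in_def L_def[symmetric] qB using sL val by blast
  qed
qed

end
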